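(* Let $a\in\mathcal{T}_n\setminus\mathcal{S}_n$ and $G\le\mathcal{S}_n$. The following are equivalent: (1) $\langle a,G\rangle\setminus G=\langle a,\mathcal{S}_n\rangle\setminus\mathcal{S}_n$; (2) $\{b\in\langle a,G\rangle:\operatorname{rank}(b)=\operatorname{rank}(a)\}=\{b\in\langle a,\mathcal{S}_n\rangle:\operatorname{rank}(b)=\operatorname{rank}(a)\}$.
   Context: $\Omega=\{1,\ldots,n\}$, $\mathcal{T}_n$ is the monoid of all maps $\Omega\to\Omega$, $\mathcal{S}_n$ the symmetric group, $\langle\cdot\rangle$ denotes the generated semigroup, and $\operatorname{rank}(b)=|\Omega b|$. *)

theory Defs
  imports "HOL-Algebra.Sym_Groups"
begin

text \<open>Full transformation monoid on {1..n}, represented extensionally: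
  maps nat to nat that send {1..n} into itself and fix every point outside {1..n}.\<close>
definition full_trans :: "nat \<Rightarrow> (nat \<Rightarrow> nat) set" where
  "full_trans n = {f. (\<forall>x\<in>{1..n}. f x \<in> {1..n}) \<and> (\<forall>x. x \<notin> {1..n} \<longrightarrow> f x = x)}"

definition sym_set :: "nat \<Rightarrow> (nat \<Rightarrow> nat) set" where
  "sym_set n = {p. p permutes {1..n}}"

inductive_set gen_sg :: "('a \<Rightarrow> 'a) set \<Rightarrow> ('a \<Rightarrow> 'a) set" for X where
  base: "f \<in> X \<Longrightarrow> f \<in> gen_sg X"
| comp: "f \<in> gen_sg X \<Longrightarrow> g \<in> gen_sg X \<Longrightarrow> f \<circ> g \<in> gen_sg X"

definition rank_on :: "nat \<Rightarrow> (nat \<Rightarrow> nat) \<Rightarrow> nat" where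
  "rank_on n b = card (b ` {1..n})"

end

theory Submission
  imports Defs
begin

lemma S_props:
  assumes "p \<in> sym_set n"
  shows "p \<in> full_trans n" "inj_on p {1..n}" "inj p" "p ` {1..n} = {1..n}"
proof -
  have P: "p permutes {1..n}" using assms by (simp add: sym_set_def)
  show "p \<in> full_trans n" unfolding full_trans_def
    using permutes_in_image[OF P] permutes_not_in[OF P] by auto
  show "inj p" using permutes_inj[OF P] .
  then show "inj_on p {1..n}" by (meson inj_on_subset subset_UNIV)
  show "p ` {1..n} = {1..n}" using permutes_image[OF P] .
qed

lemma inj_S:
  assumes "f \<in> full_trans n" "inj_on f {1..n}"
  shows "f \<in> sym_set n"
proof -
  have sub: "f ` {1..n} \<subseteq> {1..n}" using assms(1) by (auto simp: full_trans_def)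
  have "f ` {1..n} = {1..n}" using endo_inj_surj[OF _ sub assms(2)] by simp
  then have "bij_betw f {1..n} {1..n}" using assms(2) by (simp add: bij_betw_def)
  then have "f permutes {1..n}"
    using assms(1) by (intro bij_imp_permutes) (auto simp: full_trans_def)
  then show ?thesis by (simp add: sym_set_def)
qed

lemma ft_comp: "f \<in> full_trans n \<Longrightarrow> g \<in> full_trans n \<Longrightarrow> f \<circ> g \<in> full_trans n"
  by (auto simp: full_trans_def)

lemma gen_ft: "X \<subseteq> full_trans n \<Longrightarrow> w \<in> gen_sg X \<Longrightarrow> w \<in> full_trans n"
  by (rotate_tac, induction w rule: gen_sg.induct) (auto intro: ft_comp)

lemma gen_mono: "X \<subseteq> Y \<Longrightarrow> w \<in> gen_sg X \<Longrightarrow> w \<in> gen_sg Y"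
  by (rotate_tac, induction w rule: gen_sg.induct) (auto intro: gen_sg.intros)

lemma rank_S: "p \<in> sym_set n \<Longrightarrow> rank_on n p = n"
  using S_props(4) by (simp add: rank_on_def)

lemma rank_noninj: "\<not> inj_on f {1..n} \<Longrightarrow> rank_on n f \<noteq> n"
  using inj_on_iff_eq_card[of "{1..n}" f] by (simp add: rank_on_def)

lemma rank_conj:
  assumes "g \<in> sym_set n" "h \<in> sym_set n"
  shows "rank_on n (g \<circ> a \<circ> h) = rank_on n a"
proof -
  have "(g \<circ> a \<circ> h) ` {1..n} = g ` (a ` (h ` {1..n}))" by (simp add: image_comp)
  also have "\<dots> = g ` (a ` {1..n})" using S_props(4)[OF assms(2)] by simp
  finally show ?thesis unfolding rank_on_def
    using S_props(3)[OF assms(1)] by (simp add: card_image inj_on_subset)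
qed

lemma S_comp: "p \<in> sym_set n \<Longrightarrow> q \<in> sym_set n \<Longrightarrow> p \<circ> q \<in> sym_set n"
  by (simp add: sym_set_def permutes_compose)

lemma id_S: "id \<in> sym_set n"
  by (simp add: sym_set_def permutes_id)

lemma G_noninj:
  assumes GS: "G \<subseteq> sym_set n" and Gc: "\<And>x y. x \<in> G \<Longrightarrow> y \<in> G \<Longrightarrow> x \<circ> y \<in> G"
    and a: "a \<in> full_trans n" "\<not> inj_on a {1..n}"
    and w: "w \<in> gen_sg (insert a G)"
  shows "w \<in> G \<or> \<not> inj_on w {1..n}"
  using w
proof (induction w rule: gen_sg.induct)
  case (base f) then show ?case using a by auto
next
  case (comp f g)
  have ftg: "g \<in> full_trans n"
    using gen_ft[OF _ comp.hyps(2), of n] a GS S_props(1) by blast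
  show ?case
  proof (cases "inj_on g {1..n}")
    case False
    then have "\<not> inj_on (f \<circ> g) {1..n}" using inj_on_imageI2 by blast
    then show ?thesis by blast
  next
    case True
    then have gG: "g \<in> G" using comp.IH(2) by blast
    have gim: "g ` {1..n} = {1..n}" using S_props(4) gG GS by blast
    show ?thesis
    proof (cases "inj_on f {1..n}")
      case False
      then have "\<not> inj_on (f \<circ> g) {1..n}" using inj_on_imageI[of f g "{1..n}"] gim by auto
      then show ?thesis by blast
    next
      case True
      then have "f \<in> G" using comp.IH(1) by blast
      then show ?thesis using Gc gG by blast
    qed
  qed
qed

lemma S_part:
  assumes a: "\<And>g h. g \<in> sym_set n \<Longrightarrow> h \<in> sym_set n \<Longrightarrow> g \<circ> a \<circ> h \<in> gen_sg (insert a G)"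
    and w: "w \<in> gen_sg (insert a (sym_set n))"
  shows "w \<in> sym_set n \<or> (\<forall>g\<in>sym_set n. \<forall>h\<in>sym_set n. g \<circ> w \<circ> h \<in> gen_sg (insert a G))"
  using w
proof (induction w rule: gen_sg.induct)
  case (base f) then show ?case using a by blast
next
  case (comp f g)
  show ?case
  proof (cases "f \<in> sym_set n")
    case fS: True
    show ?thesis
    proof (cases "g \<in> sym_set n")
      case True then show ?thesis using fS S_comp by blast
    next
      case False
      then have IH: "\<forall>x\<in>sym_set n. \<forall>h\<in>sym_set n. x \<circ> g \<circ> h \<in> gen_sg (insert a G)"
        using comp.IH(2) by blast
      have "\<forall>x\<in>sym_set n. \<forall>h\<in>sym_set n. x \<circ> (f \<circ> g) \<circ> h \<in> gen_sg (insert a G)"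
      proof (intro ballI)
        fix x h assume "x \<in> sym_set n" "h \<in> sym_set n"
        then have "(x \<circ> f) \<circ> g \<circ> h \<in> gen_sg (insert a G)" using IH fS S_comp by blast
        then show "x \<circ> (f \<circ> g) \<circ> h \<in> gen_sg (insert a G)" by (simp add: comp_assoc)
      qed
      then show ?thesis by blast
    qed
  next
    case fN: False
    then have IHf: "\<forall>x\<in>sym_set n. \<forall>h\<in>sym_set n. x \<circ> f \<circ> h \<in> gen_sg (insert a G)"
      using comp.IH(1) by blast
    show ?thesis
    proof (cases "g \<in> sym_set n")
      case gS: True
      have "\<forall>x\<in>sym_set n. \<forall>h\<in>sym_set n. x \<circ> (f \<circ> g) \<circ> h \<in> gen_sg (insert a G)"
      proof (intro ballI)
        fix x h assume "x \<in> sym_set n" "h \<in> sym_set n"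
        then have "x \<circ> f \<circ> (g \<circ> h) \<in> gen_sg (insert a G)" using IHf gS S_comp by blast
        then show "x \<circ> (f \<circ> g) \<circ> h \<in> gen_sg (insert a G)" by (simp add: comp_assoc)
      qed
      then show ?thesis by blast
    next
      case False
      then have IHg: "\<forall>x\<in>sym_set n. \<forall>h\<in>sym_set n. x \<circ> g \<circ> h \<in> gen_sg (insert a G)"
        using comp.IH(2) by blast
      have "\<forall>x\<in>sym_set n. \<forall>h\<in>sym_set n. x \<circ> (f \<circ> g) \<circ> h \<in> gen_sg (insert a G)"
      proof (intro ballI)
        fix x h assume xh: "x \<in> sym_set n" "h \<in> sym_set n"
        have 1: "x \<circ> f \<circ> id \<in> gen_sg (insert a G)" using IHf xh id_S by blast
        have 2: "id \<circ> g \<circ> h \<in> gen_sg (insert a G)" using IHg xh id_S by blast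
        have "(x \<circ> f \<circ> id) \<circ> (id \<circ> g \<circ> h) \<in> gen_sg (insert a G)"
          using gen_sg.comp[OF 1 2] .
        then show "x \<circ> (f \<circ> g) \<circ> h \<in> gen_sg (insert a G)" by (simp add: comp_assoc)
      qed
      then show ?thesis by blast
    qed
  qed
qed

theorem lemma8p2:
  fixes n :: nat and a :: "nat \<Rightarrow> nat" and G :: "(nat \<Rightarrow> nat) set"
  assumes "a \<in> full_trans n - sym_set n"
    and "subgroup G (sym_group n)"
  shows "(gen_sg (insert a G) - G = gen_sg (insert a (sym_set n)) - sym_set n)
     \<longleftrightarrow> ({b \<in> gen_sg (insert a G). rank_on n b = rank_on n a}
          = {b \<in> gen_sg (insert a (sym_set n)). rank_on n b = rank_on n a})"
proof -
  have aft: "a \<in> full_trans n" and aS: "a \<notin> sym_set n" using assms(1) by auto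
  have ainj: "\<not> inj_on a {1..n}" using inj_S aft aS by blast
  have GS: "G \<subseteq> sym_set n"
    using subgroup.subset[OF assms(2)] by (auto simp: sym_group_carrier sym_set_def)
  have Gc: "\<And>x y. x \<in> G \<Longrightarrow> y \<in> G \<Longrightarrow> x \<circ> y \<in> G"
    using subgroup.m_closed[OF assms(2)] by (simp add: sym_group_mult)
  have rk: "\<And>b. rank_on n b = rank_on n a \<Longrightarrow> b \<notin> sym_set n"
    using rank_S rank_noninj[OF ainj] by metis
  show ?thesis
  proof
    assume H: "gen_sg (insert a G) - G = gen_sg (insert a (sym_set n)) - sym_set n"
    have "{b \<in> gen_sg (insert a G). rank_on n b = rank_on n a}
        = {b \<in> gen_sg (insert a G) - G. rank_on n b = rank_on n a}" using rk GS by blast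
    also have "\<dots> = {b \<in> gen_sg (insert a (sym_set n)) - sym_set n. rank_on n b = rank_on n a}"
      using H by simp
    also have "\<dots> = {b \<in> gen_sg (insert a (sym_set n)). rank_on n b = rank_on n a}"
      using rk by blast
    finally show "{b \<in> gen_sg (insert a G). rank_on n b = rank_on n a}
          = {b \<in> gen_sg (insert a (sym_set n)). rank_on n b = rank_on n a}" .
  next
    assume H: "{b \<in> gen_sg (insert a G). rank_on n b = rank_on n a}
          = {b \<in> gen_sg (insert a (sym_set n)). rank_on n b = rank_on n a}"
    have conj: "g \<circ> a \<circ> h \<in> gen_sg (insert a G)" if "g \<in> sym_set n" "h \<in> sym_set n" for g h
    proof -
      have "g \<circ> a \<circ> h \<in> gen_sg (insert a (sym_set n))"
        using that by (intro gen_sg.comp gen_sg.base) auto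
      moreover have "rank_on n (g \<circ> a \<circ> h) = rank_on n a" using rank_conj that by blast
      ultimately show ?thesis using H by blast
    qed
    show "gen_sg (insert a G) - G = gen_sg (insert a (sym_set n)) - sym_set n"
    proof
      show "gen_sg (insert a G) - G \<subseteq> gen_sg (insert a (sym_set n)) - sym_set n"
      proof
        fix w assume w: "w \<in> gen_sg (insert a G) - G"
        then have "\<not> inj_on w {1..n}" using G_noninj[OF GS Gc aft ainj] by blast
        then have "w \<notin> sym_set n" using S_props(2) by blast
        moreover have "w \<in> gen_sg (insert a (sym_set n))"
          using gen_mono[of "insert a G" "insert a (sym_set n)"] GS w by blast
        ultimately show "w \<in> gen_sg (insert a (sym_set n)) - sym_set n" by blast
      qed
    next
      show "gen_sg (insert a (sym_set n)) - sym_set n \<subseteq> gen_sg (insert a G) - G"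
      proof
        fix w assume w: "w \<in> gen_sg (insert a (sym_set n)) - sym_set n"
        then have "id \<circ> w \<circ> id \<in> gen_sg (insert a G)"
          using S_part[of n a G w] conj id_S by blast
        then show "w \<in> gen_sg (insert a G) - G" using w GS by auto
      qed
    qed
  qed
qed

end
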